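(* Let $F$ be a field, $n\ge3$, and let $x\mapsto\bar x$ be either the identity map of $F$ or a field automorphism of $F$ of order $2$ (applied entrywise to matrices). Let $G$ be the set of block matrices $\begin{pmatrix}a&b\\c&d\end{pmatrix}\in\mathrm{SL}_{2n}(F)$ ($n\times n$ blocks) satisfying $$a\bar d^T+b\bar c^T=1_n,\quad a\bar b^T+b\bar a^T=0,\quad c\bar d^T+d\bar c^T=0.$$ Let $V=\left\{\begin{pmatrix}1&k\\0&1\end{pmatrix}:\bar k^T=-k\right\}$, $V^T=\left\{\begin{pmatrix}1&0\\k&1\end{pmatrix}:\bar k^T=-k\right\}$ and $H=\left\{\begin{pmatrix}a^{-1}&0\\0&\bar a^T\end{pmatrix}:a\in\mathrm{GL}_n(F)\right\}$. Then $G=VV^TV(H\cap G)$. *)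

theory Defs
  imports "Jordan_Normal_Form.Determinant"
begin

definition field_aut :: "('a::field \<Rightarrow> 'a) \<Rightarrow> bool" where
  "field_aut \<sigma> \<longleftrightarrow> bij \<sigma> \<and> (\<forall>x y. \<sigma> (x + y) = \<sigma> x + \<sigma> y) \<and>
     (\<forall>x y. \<sigma> (x * y) = \<sigma> x * \<sigma> y) \<and> \<sigma> 1 = 1"

definition admissible_bar :: "('a::field \<Rightarrow> 'a) \<Rightarrow> bool" where
  "admissible_bar \<sigma> \<longleftrightarrow> \<sigma> = id \<or> (field_aut \<sigma> \<and> \<sigma> \<circ> \<sigma> = id \<and> \<sigma> \<noteq> id)"

definition ctr :: "('a \<Rightarrow> 'a) \<Rightarrow> 'a mat \<Rightarrow> 'a mat" where
  "ctr \<sigma> A = transpose_mat (map_mat \<sigma> A)"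

definition grpG :: "('a::field \<Rightarrow> 'a) \<Rightarrow> nat \<Rightarrow> 'a mat set" where
  "grpG \<sigma> n = {four_block_mat a b c d | a b c d.
      a \<in> carrier_mat n n \<and> b \<in> carrier_mat n n \<and> c \<in> carrier_mat n n \<and> d \<in> carrier_mat n n \<and>
      det (four_block_mat a b c d) = 1 \<and>
      a * ctr \<sigma> d + b * ctr \<sigma> c = 1\<^sub>m n \<and>
      a * ctr \<sigma> b + b * ctr \<sigma> a = 0\<^sub>m n n \<and>
      c * ctr \<sigma> d + d * ctr \<sigma> c = 0\<^sub>m n n}"

definition grpV :: "('a::field \<Rightarrow> 'a) \<Rightarrow> nat \<Rightarrow> 'a mat set" where
  "grpV \<sigma> n = {four_block_mat (1\<^sub>m n) k (0\<^sub>m n n) (1\<^sub>m n) | k.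
      k \<in> carrier_mat n n \<and> ctr \<sigma> k = - k}"

definition grpVT :: "('a::field \<Rightarrow> 'a) \<Rightarrow> nat \<Rightarrow> 'a mat set" where
  "grpVT \<sigma> n = {four_block_mat (1\<^sub>m n) (0\<^sub>m n n) k (1\<^sub>m n) | k.
      k \<in> carrier_mat n n \<and> ctr \<sigma> k = - k}"

definition grpH :: "('a::field \<Rightarrow> 'a) \<Rightarrow> nat \<Rightarrow> 'a mat set" where
  "grpH \<sigma> n = {four_block_mat ainv (0\<^sub>m n n) (0\<^sub>m n n) (ctr \<sigma> a) | a ainv.
      a \<in> carrier_mat n n \<and> ainv \<in> carrier_mat n n \<and>
      a * ainv = 1\<^sub>m n \<and> ainv * a = 1\<^sub>m n}"

end

theory Submission
  imports Defs "Jordan_Normal_Form.Matrix_Kernel"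
begin

locale sq = fixes n :: nat
begin
abbreviation C where "C A \<equiv> A \<in> carrier_mat n n"

lemma c_mult[simp]: "C (A::'a::field mat) \<Longrightarrow> C B \<Longrightarrow> C (A * B)" by auto
lemma c_add[simp]: "C A \<Longrightarrow> C B \<Longrightarrow> C (A + B)" by auto
lemma c_minus[simp]: "C A \<Longrightarrow> C B \<Longrightarrow> C (A - B)" by auto
lemma c_uminus[simp]: "C A \<Longrightarrow> C (- A)" by auto
lemma c_one[simp]: "C (1\<^sub>m n)" by auto
lemma c_zero[simp]: "C (0\<^sub>m n n)" by auto

lemma m_assoc: "C (A::'a::field mat) \<Longrightarrow> C B \<Longrightarrow> C D \<Longrightarrow> A * B * D = A * (B * D)"
  by (rule assoc_mult_mat)
lemma m_distl: "C (A::'a::field mat) \<Longrightarrow> C B \<Longrightarrow> C D \<Longrightarrow> A * (B + D) = A * B + A * D"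
  by (rule mult_add_distrib_mat)
lemma m_distr: "C (A::'a::field mat) \<Longrightarrow> C B \<Longrightarrow> C D \<Longrightarrow> (A + B) * D = A * D + B * D"
  by (rule add_mult_distrib_mat)
lemma m_minus: "C A \<Longrightarrow> C B \<Longrightarrow> A - (B::'a::field mat) = A + - B"
  by (rule minus_add_uminus_mat)
lemma a_assoc: "C A \<Longrightarrow> C B \<Longrightarrow> C D \<Longrightarrow> A + B + D = A + (B + (D::'a::field mat))"
  by (rule assoc_add_mat)
lemma a_comm: "C A \<Longrightarrow> C B \<Longrightarrow> A + B = B + (A::'a::field mat)"
  by (rule comm_add_mat)
lemma a_lcomm: "C A \<Longrightarrow> C B \<Longrightarrow> C D \<Longrightarrow> A + (B + D) = B + (A + (D::'a::field mat))"
  by (metis a_assoc a_comm)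
lemma a_uminus_add: "C A \<Longrightarrow> C B \<Longrightarrow> - (A + B) = - A + - (B::'a::field mat)"
  by (rule eq_matI) auto
lemma a_cancel1: "C A \<Longrightarrow> A + - A = (0\<^sub>m n n :: 'a::field mat)"
  by (rule eq_matI) auto
lemma a_cancel2: "C A \<Longrightarrow> C B \<Longrightarrow> A + (- A + B) = (B :: 'a::field mat)"
  by (rule eq_matI) auto
lemma a_cancel3: "C A \<Longrightarrow> - A + A = (0\<^sub>m n n :: 'a::field mat)"
  by (rule eq_matI) auto
lemma a_cancel4: "C A \<Longrightarrow> C B \<Longrightarrow> - A + (A + B) = (B :: 'a::field mat)"
  by (rule eq_matI) auto
lemma z_l: "C (A::'a::field mat) \<Longrightarrow> 0\<^sub>m n n + A = A" by auto
lemma z_r: "C (A::'a::field mat) \<Longrightarrow> A + 0\<^sub>m n n = A" by auto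
lemma o_l: "C (A::'a::field mat) \<Longrightarrow> 1\<^sub>m n * A = A" by auto
lemma o_r: "C (A::'a::field mat) \<Longrightarrow> A * 1\<^sub>m n = A" by auto
lemma zm_l: "C A \<Longrightarrow> 0\<^sub>m n n * A = (0\<^sub>m n n :: 'a::field mat)" by auto
lemma zm_r: "C A \<Longrightarrow> A * 0\<^sub>m n n = (0\<^sub>m n n :: 'a::field mat)" by auto
lemma um_l: "C A \<Longrightarrow> C B \<Longrightarrow> - A * B = - ((A :: 'a::field mat) * B)" by simp
lemma um_r: "C A \<Longrightarrow> C B \<Longrightarrow> A * - B = - ((A :: 'a::field mat) * B)" by simp
lemma uu: "- (- (A :: 'a::field mat)) = A" by simp
lemma uz: "- (0\<^sub>m n n) = (0\<^sub>m n n :: 'a::field mat)" by (rule eq_matI) auto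

lemma add_eq0_neg: "C (A::'a::field mat) \<Longrightarrow> C B \<Longrightarrow> A + B = 0\<^sub>m n n \<Longrightarrow> A = - B"
  by (metis a_assoc a_cancel1 c_uminus z_r z_l)

lemma mv0[simp]: "C (M::'a::field mat) \<Longrightarrow> M *\<^sub>v 0\<^sub>v n = 0\<^sub>v n"
  by (rule eq_vecI) (auto simp: scalar_prod_def)

lemmas msimp = m_assoc m_distl m_distr m_minus a_assoc a_lcomm a_comm a_uminus_add
  a_cancel1 a_cancel2 a_cancel3 a_cancel4 z_l z_r o_l o_r zm_l zm_r um_l um_r uu uz

end

lemma shrink: fixes Y :: "'b::field mat"
  assumes Y: "Y \<in> carrier_mat n n" and YJ: "\<forall>r<n. \<forall>j<n. j \<notin> J \<longrightarrow> Y $$ (r,j) = 0"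
  and phi: "\<phi> \<in> carrier_vec n" and z0: "z0 \<in> carrier_vec n" and nz: "\<phi> \<bullet> (Y *\<^sub>v z0) \<noteq> 0"
  shows "\<exists>i\<in>J. \<exists>Y'\<in>carrier_mat n n. (\<forall>r<n. \<forall>j<n. j \<notin> J - {i} \<longrightarrow> Y' $$ (r,j) = 0) \<and>
     (\<forall>z\<in>carrier_vec n. \<phi> \<bullet> (Y *\<^sub>v z) = 0 \<longrightarrow> Y' *\<^sub>v z = Y *\<^sub>v z)"
proof -
  define \<psi> where "\<psi> = vec n (\<lambda>j. \<phi> \<bullet> col Y j)"
  have psi: "\<psi> \<bullet> z = \<phi> \<bullet> (Y *\<^sub>v z)" if z: "z \<in> carrier_vec n" for z
    unfolding \<psi>_def using assoc_scalar_prod[OF phi Y z] Y unfolding mult_mat_vec_def by auto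
  have psij: "\<psi> $ j = (\<Sum>r\<in>{0..<n}. \<phi> $ r * Y $$ (r,j))" if "j < n" for j
    unfolding \<psi>_def scalar_prod_def using that phi Y by auto
  have "\<psi> \<bullet> z0 \<noteq> 0" using psi[OF z0] nz by simp
  then obtain i where i: "i < n" and pi0: "\<psi> $ i * z0 $ i \<noteq> 0"
    unfolding scalar_prod_def using z0 by (metis (no_types, lifting) atLeastLessThan_iff carrier_vecD sum.neutral)
  then have pi: "\<psi> $ i \<noteq> 0" by auto
  have iJ: "i \<in> J"
  proof (rule ccontr)
    assume "i \<notin> J"
    then have "\<psi> $ i = 0" using psij[OF i] YJ i by simp
    with pi show False by simp
  qed
  define Y' where "Y' = mat n n (\<lambda>(r,s). Y $$ (r,s) - Y $$ (r,i) * \<psi> $ s / \<psi> $ i)"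
  have Y': "Y' \<in> carrier_mat n n" unfolding Y'_def by simp
  have zero: "\<forall>r<n. \<forall>j<n. j \<notin> J - {i} \<longrightarrow> Y' $$ (r,j) = 0"
  proof (intro allI impI)
    fix r j assume r: "r < n" and j: "j < n" and nj: "j \<notin> J - {i}"
    show "Y' $$ (r,j) = 0"
    proof (cases "j = i")
      case True
      then show ?thesis unfolding Y'_def using r j pi by simp
    next
      case False
      then have "j \<notin> J" using nj by simp
      then have "\<psi> $ j = 0" "Y $$ (r,j) = 0" using psij[OF j] YJ j r by auto
      then show ?thesis unfolding Y'_def using r j by simp
    qed
  qed
  have eq: "Y' *\<^sub>v z = Y *\<^sub>v z" if z: "z \<in> carrier_vec n" and pz: "\<phi> \<bullet> (Y *\<^sub>v z) = 0" for z
  proof (rule eq_vecI)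
    have pz': "(\<Sum>s\<in>{0..<n}. \<psi> $ s * z $ s) = 0" using psi[OF z] pz z unfolding scalar_prod_def by simp
    fix r assume "r < dim_vec (Y *\<^sub>v z)"
    then have r: "r < n" using Y by simp
    have "(Y' *\<^sub>v z) $ r = (\<Sum>s\<in>{0..<n}. (Y $$ (r,s) - Y $$ (r,i) * \<psi> $ s / \<psi> $ i) * z $ s)"
      unfolding Y'_def using r z by (simp add: scalar_prod_def)
    also have "\<dots> = (\<Sum>s\<in>{0..<n}. Y $$ (r,s) * z $ s) - Y $$ (r,i) / \<psi> $ i * (\<Sum>s\<in>{0..<n}. \<psi> $ s * z $ s)"
      by (simp add: algebra_simps sum_subtractf sum_distrib_left)
    also have "\<dots> = (Y *\<^sub>v z) $ r" using r z Y pz' by (simp add: scalar_prod_def)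
    finally show "(Y' *\<^sub>v z) $ r = (Y *\<^sub>v z) $ r" .
  qed (use Y Y' in auto)
  show ?thesis using iJ Y' zero eq by blast
qed

locale barl = sq n for n +
  fixes \<sigma> :: "'a::field \<Rightarrow> 'a"
  assumes s_add: "\<sigma> (x + y) = \<sigma> x + \<sigma> y" and s_mult: "\<sigma> (x * y) = \<sigma> x * \<sigma> y"
    and s_one: "\<sigma> 1 = 1" and s_inv: "\<sigma> (\<sigma> x) = x"
begin

lemma s_zero[simp]: "\<sigma> 0 = 0"
  using s_add[of 0 0] by (metis add_cancel_right_right add_0)
lemma s_uminus: "\<sigma> (- x) = - \<sigma> x"
proof -
  have "\<sigma> x + \<sigma> (-x) = 0" using s_add[of x "-x"] by simp
  from minus_unique[OF this] show ?thesis by simp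
qed
lemma s_minus: "\<sigma> (x - y) = \<sigma> x - \<sigma> y"
  by (metis diff_conv_add_uminus s_add s_uminus)
lemma s_sum: "\<sigma> (sum f A) = sum (\<lambda>x. \<sigma> (f x)) A"
  by (induct A rule: infinite_finite_induct) (auto simp: s_add)
lemma s_eq0[simp]: "\<sigma> x = 0 \<longleftrightarrow> x = 0"
  by (metis s_inv s_zero)

abbreviation ct where "ct A \<equiv> ctr \<sigma> A"

lemma ct_carrier[simp]: "A \<in> carrier_mat r c \<Longrightarrow> ct A \<in> carrier_mat c r"
  unfolding ctr_def by auto
lemma ct_dim[simp]: "dim_row (ct A) = dim_col A" "dim_col (ct A) = dim_row A"
  unfolding ctr_def by auto
lemma ct_index[simp]: "i < dim_col A \<Longrightarrow> j < dim_row A \<Longrightarrow> ct A $$ (i,j) = \<sigma> (A $$ (j,i))"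
  unfolding ctr_def by auto

lemma ct_mult: assumes "A \<in> carrier_mat r m" "B \<in> carrier_mat m c"
  shows "ct (A * B) = ct B * ct A"
proof (rule eq_matI)
  fix i j assume ij: "i < dim_row (ct B * ct A)" "j < dim_col (ct B * ct A)"
  then have i: "i < c" and j: "j < r" using assms by auto
  show "ct (A * B) $$ (i, j) = (ct B * ct A) $$ (i, j)"
    using assms i j by (auto simp: scalar_prod_def s_sum s_mult mult.commute intro!: sum.cong)
qed (insert assms, auto)

lemma ct_add: assumes "A \<in> carrier_mat r c" "B \<in> carrier_mat r c"
  shows "ct (A + B) = ct A + ct B"
  by (rule eq_matI, insert assms, auto simp: s_add)
lemma ct_uminus: assumes "A \<in> carrier_mat r c"
  shows "ct (- A) = - ct A"
  by (rule eq_matI, insert assms, auto simp: s_uminus)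
lemma ct_minus: assumes "A \<in> carrier_mat r c" "B \<in> carrier_mat r c"
  shows "ct (A - B) = ct A - ct B"
  by (rule eq_matI, insert assms, auto simp: s_minus)
lemma ct_ct[simp]: "ct (ct A) = A"
  by (rule eq_matI, auto simp: s_inv)
lemma ct_one[simp]: "ct (1\<^sub>m k) = 1\<^sub>m k"
  by (rule eq_matI, auto simp: s_one)
lemma ct_zero[simp]: "ct (0\<^sub>m k l) = 0\<^sub>m l k"
  by (rule eq_matI, auto)

lemma ct_fb: assumes "A \<in> carrier_mat n1 m1" "B \<in> carrier_mat n1 m2" "D \<in> carrier_mat n2 m1" "E \<in> carrier_mat n2 m2"
  shows "ct (four_block_mat A B D E) = four_block_mat (ct A) (ct D) (ct B) (ct E)"
  unfolding ctr_def using assms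
  by (simp add: map_four_block_mat[OF assms] transpose_four_block_mat)

lemma ct_fb_n: "C A \<Longrightarrow> C B \<Longrightarrow> C D \<Longrightarrow> C E \<Longrightarrow>
  ct (four_block_mat A B D E) = four_block_mat (ct A) (ct D) (ct B) (ct E)"
  by (rule ct_fb)

lemma ctn_mult: "C A \<Longrightarrow> C B \<Longrightarrow> ct (A * B) = ct B * ct A" by (rule ct_mult)
lemma ctn_add: "C A \<Longrightarrow> C B \<Longrightarrow> ct (A + B) = ct A + ct B" by (rule ct_add)
lemma ctn_minus: "C A \<Longrightarrow> C B \<Longrightarrow> ct (A - B) = ct A - ct B" by (rule ct_minus)
lemma ctn_uminus: "C A \<Longrightarrow> ct (- A) = - ct A" by (rule ct_uminus)
lemmas ctsimp = ctn_mult ctn_add ctn_minus ctn_uminus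
lemma c_ct[simp]: "C A \<Longrightarrow> C (ct A)" by simp

definition Jm where "Jm = four_block_mat (0\<^sub>m n n) (1\<^sub>m n) (1\<^sub>m n) (0\<^sub>m n n)"
lemma Jm_carrier[simp]: "Jm \<in> carrier_mat (n+n) (n+n)" unfolding Jm_def by simp

lemma fbJ: assumes "C (a::'a mat)" "C b" "C c" "C d" "C e" "C f" "C g" "C h"
  shows "four_block_mat a b c d * Jm * four_block_mat e f g h
   = four_block_mat (b*e + a*g) (b*f + a*h) (d*e + c*g) (d*f + c*h)"
proof -
  have "four_block_mat a b c d * Jm = four_block_mat (a * 0\<^sub>m n n + b * 1\<^sub>m n) (a * 1\<^sub>m n + b * 0\<^sub>m n n)
    (c * 0\<^sub>m n n + d * 1\<^sub>m n) (c * 1\<^sub>m n + d * 0\<^sub>m n n)"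
    unfolding Jm_def by (rule mult_four_block_mat) (use assms in auto)
  also have "\<dots> = four_block_mat b a d c" using assms by (simp add: msimp)
  finally have 1: "four_block_mat a b c d * Jm = four_block_mat b a d c" .
  have "four_block_mat b a d c * four_block_mat e f g h = four_block_mat (b*e + a*g) (b*f + a*h) (d*e + c*g) (d*f + c*h)"
    by (rule mult_four_block_mat) (use assms in auto)
  then show ?thesis unfolding 1 .
qed

lemma fb_idx: assumes "C (a::'a mat)" "C b" "C c" "C d" "i < n" "j < n"
  shows "four_block_mat a b c d $$ (i,j) = a $$ (i,j)"
    "four_block_mat a b c d $$ (i,j+n) = b $$ (i,j)"
    "four_block_mat a b c d $$ (i+n,j) = c $$ (i,j)"
    "four_block_mat a b c d $$ (i+n,j+n) = d $$ (i,j)"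
proof -
  have d: "dim_row a = n" "dim_col a = n" "dim_row d = n" "dim_col d = n" using assms by auto
  show "four_block_mat a b c d $$ (i,j) = a $$ (i,j)"
    "four_block_mat a b c d $$ (i,j+n) = b $$ (i,j)"
    "four_block_mat a b c d $$ (i+n,j) = c $$ (i,j)"
    "four_block_mat a b c d $$ (i+n,j+n) = d $$ (i,j)"
    by (subst index_mat_four_block, use d assms(5,6) in auto)+
qed

lemma fb_eq: assumes "C (a::'a mat)" "C b" "C c" "C d" "C a'" "C b'" "C c'" "C d'"
  and eq: "four_block_mat a b c d = four_block_mat a' b' c' d'"
shows "a = a' \<and> b = b' \<and> c = c' \<and> d = d'"
proof -
  have "\<And>i j. i < n \<Longrightarrow> j < n \<Longrightarrow> a $$ (i,j) = a' $$ (i,j) \<and> b $$ (i,j) = b' $$ (i,j)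
    \<and> c $$ (i,j) = c' $$ (i,j) \<and> d $$ (i,j) = d' $$ (i,j)"
    using fb_idx[OF assms(1-4)] fb_idx[OF assms(5-8)] eq by metis
  then show ?thesis using assms(1-8) by (intro conjI eq_matI) auto
qed

lemma JJ: "(Jm :: 'a mat) * Jm = 1\<^sub>m (n+n)"
proof -
  have "(Jm :: 'a mat) * Jm = four_block_mat (0\<^sub>m n n * 0\<^sub>m n n + 1\<^sub>m n * 1\<^sub>m n) (0\<^sub>m n n * 1\<^sub>m n + 1\<^sub>m n * 0\<^sub>m n n)
    (1\<^sub>m n * 0\<^sub>m n n + 0\<^sub>m n n * 1\<^sub>m n) (1\<^sub>m n * 1\<^sub>m n + 0\<^sub>m n n * 0\<^sub>m n n)"
    unfolding Jm_def by (rule mult_four_block_mat) auto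
  also have "\<dots> = four_block_mat (1\<^sub>m n) (0\<^sub>m n n) (0\<^sub>m n n) (1\<^sub>m n)" by (simp add: msimp)
  finally show ?thesis by simp
qed


abbreviation N2 where "N2 \<equiv> n + n"
interpretation b2: sq "n+n" .
lemmas bsimp = b2.msimp

lemma JR_fb: assumes "C (a::'a mat)" "C b" "C c" "C d"
  shows "(four_block_mat a b c d * Jm * ct (four_block_mat a b c d) = Jm) \<longleftrightarrow>
    (a * ct d + b * ct c = 1\<^sub>m n \<and> a * ct b + b * ct a = 0\<^sub>m n n \<and> c * ct d + d * ct c = 0\<^sub>m n n)"
proof -
  have e: "four_block_mat a b c d * Jm * ct (four_block_mat a b c d) =
    four_block_mat (b * ct a + a * ct b) (b * ct c + a * ct d) (d * ct a + c * ct b) (d * ct c + c * ct d)"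
    unfolding ct_fb_n[OF assms] by (rule fbJ) (use assms in auto)
  have t: "d * ct a + c * ct b = ct (a * ct d + b * ct c)"
    using assms by (simp add: ctsimp msimp)
  show ?thesis
  proof
    assume "four_block_mat a b c d * Jm * ct (four_block_mat a b c d) = Jm"
    then have "four_block_mat (b * ct a + a * ct b) (b * ct c + a * ct d) (d * ct a + c * ct b) (d * ct c + c * ct d)
       = Jm" unfolding e .
    then have "four_block_mat (b * ct a + a * ct b) (b * ct c + a * ct d) (d * ct a + c * ct b) (d * ct c + c * ct d)
       = four_block_mat (0\<^sub>m n n) (1\<^sub>m n) (1\<^sub>m n) (0\<^sub>m n n)" unfolding Jm_def .
    from fb_eq[OF _ _ _ _ _ _ _ _ this] assms
    show "a * ct d + b * ct c = 1\<^sub>m n \<and> a * ct b + b * ct a = 0\<^sub>m n n \<and> c * ct d + d * ct c = 0\<^sub>m n n"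
      by (simp add: msimp)
  next
    assume r: "a * ct d + b * ct c = 1\<^sub>m n \<and> a * ct b + b * ct a = 0\<^sub>m n n \<and> c * ct d + d * ct c = 0\<^sub>m n n"
    have "b * ct a + a * ct b = 0\<^sub>m n n" "b * ct c + a * ct d = 1\<^sub>m n" "d * ct c + c * ct d = 0\<^sub>m n n"
      "d * ct a + c * ct b = 1\<^sub>m n"
      using r assms unfolding t by (simp_all add: msimp)
    then show "four_block_mat a b c d * Jm * ct (four_block_mat a b c d) = Jm"
      by (subst e) (simp add: Jm_def)
  qed
qed

lemma dual: assumes "C (a::'a mat)" "C b" "C c" "C d"
  and J: "four_block_mat a b c d * Jm * ct (four_block_mat a b c d) = Jm"
  shows "ct a * c + ct c * a = 0\<^sub>m n n" "ct a * d + ct c * b = 1\<^sub>m n" "ct d * a + ct b * c = 1\<^sub>m n"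
proof -
  define M where "M = four_block_mat a b c d"
  have M: "M \<in> carrier_mat N2 N2" unfolding M_def using assms by auto
  have JC: "(Jm :: 'a mat) \<in> carrier_mat N2 N2" by simp
  define K where "K = Jm * ct M * Jm"
  have K: "K \<in> carrier_mat N2 N2" unfolding K_def using M by auto
  have "M * K = (M * Jm * ct M) * Jm" unfolding K_def using M by (simp add: bsimp)
  also have "\<dots> = 1\<^sub>m N2" using J JJ unfolding M_def by simp
  finally have "K * M = 1\<^sub>m N2" using mat_mult_left_right_inverse[OF M K] by simp
  then have "Jm * (K * M) = Jm" using right_mult_one_mat[OF JC] by simp
  moreover have "Jm * (K * M) = (Jm * Jm) * (ct M * Jm * M)" unfolding K_def using M by (simp add: bsimp)
  ultimately have "ct M * Jm * M = Jm" unfolding JJ using M by simp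
  then have "four_block_mat (ct c * a + ct a * c) (ct c * b + ct a * d) (ct d * a + ct b * c) (ct d * b + ct b * d)
    = four_block_mat (0\<^sub>m n n) (1\<^sub>m n) (1\<^sub>m n) (0\<^sub>m n n)"
    unfolding M_def ct_fb_n[OF assms(1-4)] Jm_def[symmetric] by (subst (asm) fbJ) (use assms in auto)
  from fb_eq[OF _ _ _ _ _ _ _ _ this] assms
  show "ct a * c + ct c * a = 0\<^sub>m n n" "ct a * d + ct c * b = 1\<^sub>m n" "ct d * a + ct b * c = 1\<^sub>m n"
    by (simp_all add: msimp)
qed

lemma G_char1: "M \<in> grpG \<sigma> n \<Longrightarrow> M \<in> carrier_mat N2 N2 \<and> det M = 1 \<and> M * Jm * ct M = Jm"
proof -
  assume "M \<in> grpG \<sigma> n"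
  then obtain a b c d where M: "M = four_block_mat a b c d" and abcd: "C a" "C b" "C c" "C d"
    and det: "det M = 1"
    and r: "a * ct d + b * ct c = 1\<^sub>m n \<and> a * ct b + b * ct a = 0\<^sub>m n n \<and> c * ct d + d * ct c = 0\<^sub>m n n"
    unfolding grpG_def by blast
  show ?thesis
    using JR_fb[OF abcd] r det abcd M by auto
qed

lemma G_char2: "M \<in> carrier_mat N2 N2 \<Longrightarrow> det M = 1 \<Longrightarrow> M * Jm * ct M = Jm \<Longrightarrow> M \<in> grpG \<sigma> n"
proof -
  assume M: "M \<in> carrier_mat N2 N2" and det: "det M = 1" and J: "M * Jm * ct M = Jm"
  obtain a b c d where sb: "split_block M n n = (a,b,c,d)" by (cases "split_block M n n") auto
  from split_block[OF sb, of n n] M have abcd: "C a" "C b" "C c" "C d" and Mfb: "M = four_block_mat a b c d"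
    by auto
  show "M \<in> grpG \<sigma> n" unfolding grpG_def using JR_fb[OF abcd] J det abcd Mfb by blast
qed

lemma G_char: "M \<in> grpG \<sigma> n \<longleftrightarrow> M \<in> carrier_mat N2 N2 \<and> det M = 1 \<and> M * Jm * ct M = Jm"
  using G_char1 G_char2 by blast

lemma JR_mult: assumes M1: "M1 \<in> carrier_mat N2 N2" and M2: "M2 \<in> carrier_mat N2 N2"
  and J1: "M1 * Jm * ct M1 = (Jm :: 'a mat)" and J2: "M2 * Jm * ct M2 = Jm"
  shows "(M1 * M2) * Jm * ct (M1 * M2) = Jm"
proof -
  have JC: "(Jm :: 'a mat) \<in> carrier_mat N2 N2" by simp
  have "(M1 * M2) * Jm * ct (M1 * M2) = M1 * (M2 * Jm * ct M2) * ct M1"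
    unfolding ct_mult[OF M1 M2] using M1 M2 JC
    by (simp add: b2.m_assoc)
  then show ?thesis using J1 J2 by simp
qed

lemma G_mult: "M1 \<in> grpG \<sigma> n \<Longrightarrow> M2 \<in> grpG \<sigma> n \<Longrightarrow> M1 * M2 \<in> grpG \<sigma> n"
  unfolding G_char using JR_mult by (auto simp: det_mult)

lemma G_intro: assumes "C (a::'a mat)" "C b" "C c" "C d" "det (four_block_mat a b c d) = 1"
  "a * ct d + b * ct c = 1\<^sub>m n" "a * ct b + b * ct a = 0\<^sub>m n n" "c * ct d + d * ct c = 0\<^sub>m n n"
  shows "four_block_mat a b c d \<in> grpG \<sigma> n"
  unfolding grpG_def
  apply (rule CollectI, rule exI, rule exI, rule exI, rule exI, rule conjI, rule refl)
  using assms by simp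

lemma V_in_G: assumes k: "C (k::'a mat)" and sk: "ct k = - k"
  shows "four_block_mat (1\<^sub>m n) k (0\<^sub>m n n) (1\<^sub>m n) \<in> grpG \<sigma> n"
proof -
  have "det (four_block_mat (1\<^sub>m n) k (0\<^sub>m n n) (1\<^sub>m n)) = 1"
    by (subst det_four_block_mat_lower_left_zero[of _ n _ n]) (use k in auto)
  moreover have "1\<^sub>m n * ct (1\<^sub>m n) + k * ct (0\<^sub>m n n) = 1\<^sub>m n"
    using k by (simp add: o_l zm_r z_r)
  moreover have "1\<^sub>m n * ct k + k * ct (1\<^sub>m n) = 0\<^sub>m n n"
    using k unfolding sk by (simp add: o_l o_r a_cancel3)
  moreover have "0\<^sub>m n n * ct (1\<^sub>m n) + 1\<^sub>m n * ct (0\<^sub>m n n) = (0\<^sub>m n n :: 'a mat)"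
    by (simp add: o_l zm_l z_r)
  ultimately show ?thesis using k by (intro G_intro) auto
qed

lemma VT_in_G: assumes k: "C (k::'a mat)" and sk: "ct k = - k"
  shows "four_block_mat (1\<^sub>m n) (0\<^sub>m n n) k (1\<^sub>m n) \<in> grpG \<sigma> n"
proof -
  have "det (four_block_mat (1\<^sub>m n) (0\<^sub>m n n) k (1\<^sub>m n)) = 1"
    by (subst det_four_block_mat_upper_right_zero[of _ n _ n]) (use k in auto)
  moreover have "1\<^sub>m n * ct (1\<^sub>m n) + 0\<^sub>m n n * ct k = 1\<^sub>m n"
    using k by (simp add: o_l zm_l z_r)
  moreover have "1\<^sub>m n * ct (0\<^sub>m n n) + 0\<^sub>m n n * ct (1\<^sub>m n) = (0\<^sub>m n n :: 'a mat)"
    by (simp add: o_l zm_l z_r)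
  moreover have "k * ct (1\<^sub>m n) + 1\<^sub>m n * ct k = 0\<^sub>m n n"
    using k unfolding sk by (simp add: o_l o_r a_cancel1)
  ultimately show ?thesis using k by (intro G_intro) auto
qed

lemma shift_G: assumes abcd: "C (a::'a mat)" "C b" "C c" "C d" and k: "C k" and sk: "ct k = - k"
  and G: "four_block_mat a b c d \<in> grpG \<sigma> n"
  shows "four_block_mat (a - k * c) (b - k * d) c d \<in> grpG \<sigma> n"
proof -
  have "ct (- k) = - (- k)" using k sk by (simp add: ct_uminus[of _ n n])
  from G_mult[OF V_in_G[OF _ this] G] k
  have "four_block_mat (1\<^sub>m n) (- k) (0\<^sub>m n n) (1\<^sub>m n) * four_block_mat a b c d \<in> grpG \<sigma> n" by simp
  also have "four_block_mat (1\<^sub>m n) (- k) (0\<^sub>m n n) (1\<^sub>m n) * four_block_mat a b c d =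
    four_block_mat (1\<^sub>m n * a + - k * c) (1\<^sub>m n * b + - k * d) (0\<^sub>m n n * a + 1\<^sub>m n * c) (0\<^sub>m n n * b + 1\<^sub>m n * d)"
    by (rule mult_four_block_mat) (use abcd k in auto)
  also have "\<dots> = four_block_mat (a - k * c) (b - k * d) c d" using abcd k by (simp add: msimp)
  finally show ?thesis .
qed

definition bf :: "'a vec \<Rightarrow> 'a vec \<Rightarrow> 'a" where "bf u v = map_vec \<sigma> u \<bullet> v"

lemma bf_adj: assumes M: "C (M::'a mat)" and u: "u \<in> carrier_vec n" and v: "v \<in> carrier_vec n"
  shows "bf u (M *\<^sub>v v) = bf (ct M *\<^sub>v u) v"
proof -
  have "map_vec \<sigma> (ct M *\<^sub>v u) = vec n (\<lambda>j. map_vec \<sigma> u \<bullet> col M j)"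
    using M u by (auto simp: scalar_prod_def s_sum s_mult s_inv mult.commute intro!: sum.cong)
  then show ?thesis unfolding bf_def mult_mat_vec_def[of M v]
    using assoc_scalar_prod[of "map_vec \<sigma> u" n M n v] M u v by auto
qed

lemma bf_zero[simp]: "v \<in> carrier_vec n \<Longrightarrow> bf (0\<^sub>v n) v = 0"
  unfolding bf_def by (auto simp: scalar_prod_def)

lemma bf_sum: "u \<in> carrier_vec n \<Longrightarrow> v \<in> carrier_vec n \<Longrightarrow> bf u v = (\<Sum>r\<in>{0..<n}. \<sigma> (u $ r) * v $ r)"
  unfolding bf_def scalar_prod_def by auto

lemma G_blocks: assumes abcd: "C (a::'a mat)" "C b" "C c" "C d" and G: "four_block_mat a b c d \<in> grpG \<sigma> n"
  shows "four_block_mat a b c d * Jm * ct (four_block_mat a b c d) = Jm"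
    "a * ct d + b * ct c = 1\<^sub>m n" "a * ct b + b * ct a = 0\<^sub>m n n" "c * ct d + d * ct c = 0\<^sub>m n n"
    "d * ct a + c * ct b = 1\<^sub>m n"
    "ct a * c + ct c * a = 0\<^sub>m n n" "ct a * d + ct c * b = 1\<^sub>m n" "ct d * a + ct b * c = 1\<^sub>m n"
    "det (four_block_mat a b c d) = 1"
proof -
  show J: "four_block_mat a b c d * Jm * ct (four_block_mat a b c d) = Jm" "det (four_block_mat a b c d) = 1"
    using G G_char by auto
  then show r: "a * ct d + b * ct c = 1\<^sub>m n" "a * ct b + b * ct a = 0\<^sub>m n n" "c * ct d + d * ct c = 0\<^sub>m n n"
    using JR_fb[OF abcd] by auto
  show "ct a * c + ct c * a = 0\<^sub>m n n" "ct a * d + ct c * b = 1\<^sub>m n" "ct d * a + ct b * c = 1\<^sub>m n"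
    using dual[OF abcd J(1)] by auto
  have "d * ct a + c * ct b = ct (a * ct d + b * ct c)"
    using abcd by (simp add: ctsimp msimp)
  then show "d * ct a + c * ct b = 1\<^sub>m n" using r by simp
qed

lemma iso: assumes abcd: "C (a::'a mat)" "C b" "C c" "C d" and G: "four_block_mat a b c d \<in> grpG \<sigma> n"
  and y: "y \<in> carrier_vec n" and ay: "a *\<^sub>v y = 0\<^sub>v n" and x: "x \<in> carrier_vec n"
  shows "bf (c *\<^sub>v y) (a *\<^sub>v x) = 0"
proof -
  have r: "ct a * c = - (ct c * a)" using G_blocks(6)[OF abcd G] abcd
    by (intro add_eq0_neg) auto
  have "ct a *\<^sub>v (c *\<^sub>v y) = (ct a * c) *\<^sub>v y" using abcd y by (simp add: assoc_mult_mat_vec[of _ n n _ n])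
  also have "\<dots> = - ((ct c * a) *\<^sub>v y)" unfolding r using abcd y by simp
  also have "\<dots> = 0\<^sub>v n" using abcd y ay by (simp add: assoc_mult_mat_vec[of _ n n _ n])
  finally show ?thesis using bf_adj[of a "c *\<^sub>v y" x] abcd x y by simp
qed

lemma inj: assumes abcd: "C (a::'a mat)" "C b" "C c" "C d" and G: "four_block_mat a b c d \<in> grpG \<sigma> n"
  and y: "y \<in> carrier_vec n" and ay: "a *\<^sub>v y = 0\<^sub>v n" and cy: "c *\<^sub>v y = 0\<^sub>v n"
  shows "y = 0\<^sub>v n"
proof -
  have "y = (ct d * a + ct b * c) *\<^sub>v y" using G_blocks(8)[OF abcd G] y by simp
  also have "\<dots> = ct d *\<^sub>v (a *\<^sub>v y) + ct b *\<^sub>v (c *\<^sub>v y)" using abcd y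
    by (simp add: add_mult_distrib_mat_vec[of _ n n] assoc_mult_mat_vec[of _ n n _ n])
  also have "\<dots> = 0\<^sub>v n" unfolding ay cy using abcd by simp
  finally show ?thesis .
qed

lemma nonzero_vec_idx: assumes "p \<in> carrier_vec n" "p \<noteq> 0\<^sub>v n" shows "\<exists>i<n. p $ i \<noteq> 0"
proof (rule ccontr)
  assume "\<not> (\<exists>i<n. p $ i \<noteq> 0)"
  then have "p = 0\<^sub>v n" using assms(1) by (intro eq_vecI) auto
  with assms(2) show False by simp
qed

lemma kernel_split: assumes a: "C (a::'a mat)" and c: "C c" and k0: "C k0" and x: "x \<in> carrier_vec n"
  and e: "(a - k0 * c) *\<^sub>v x = 0\<^sub>v n" and r: "r < n"
  shows "(a *\<^sub>v x) $ r = (k0 *\<^sub>v (c *\<^sub>v x)) $ r"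
proof -
  have "(a - k0 * c) *\<^sub>v x = a *\<^sub>v x - (k0 * c) *\<^sub>v x"
    using a c k0 x by (simp add: minus_mult_distrib_mat_vec[of _ n n])
  also have "(k0 * c) *\<^sub>v x = k0 *\<^sub>v (c *\<^sub>v x)" using c k0 x by (simp add: assoc_mult_mat_vec[of _ n n _ n])
  finally have eq: "a *\<^sub>v x - k0 *\<^sub>v (c *\<^sub>v x) = 0\<^sub>v n" using e by simp
  have "(a *\<^sub>v x - k0 *\<^sub>v (c *\<^sub>v x)) $ r = 0\<^sub>v n $ r" by (simp only: eq)
  then show ?thesis using r a c k0 x by simp
qed

end

context barl begin

lemma fbmult: assumes "C (A1::'a mat)" "C B1" "C C1" "C D1" "C A2" "C B2" "C C2" "C D2"
  shows "four_block_mat A1 B1 C1 D1 * four_block_mat A2 B2 C2 D2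
  = four_block_mat (A1 * A2 + B1 * C2) (A1 * B2 + B1 * D2) (C1 * A2 + D1 * C2) (C1 * B2 + D1 * D2)"
  by (rule mult_four_block_mat) (use assms in auto)

lemma decomp: assumes abcd: "C (a::'a mat)" "C b" "C c" "C d"
  and J: "four_block_mat a b c d * Jm * ct (four_block_mat a b c d) = Jm"
  and k1: "C k1" and sk: "ct k1 = - k1" and xi: "C xi"
  and inv1: "(a - k1 * c) * xi = 1\<^sub>m n" and inv2: "xi * (a - k1 * c) = 1\<^sub>m n"
  shows "ct (c * xi) = - (c * xi)"
    "ct ((b - k1 * d) * ct (a - k1 * c)) = - ((b - k1 * d) * ct (a - k1 * c))"
    "four_block_mat a b c d = four_block_mat (1\<^sub>m n) k1 (0\<^sub>m n n) (1\<^sub>m n) *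
       (four_block_mat (1\<^sub>m n) (0\<^sub>m n n) (c * xi) (1\<^sub>m n) *
       (four_block_mat (1\<^sub>m n) ((b - k1 * d) * ct (a - k1 * c)) (0\<^sub>m n n) (1\<^sub>m n) *
        four_block_mat (a - k1 * c) (0\<^sub>m n n) (0\<^sub>m n n) (ct xi)))"
proof -
  note [simp] = abcd k1 xi
  from JR_fb[OF abcd] J have r: "a * ct d + b * ct c = 1\<^sub>m n" "a * ct b + b * ct a = 0\<^sub>m n n"
    "c * ct d + d * ct c = 0\<^sub>m n n" by auto
  have r4: "d * ct a + c * ct b = 1\<^sub>m n"
  proof -
    have "d * ct a + c * ct b = ct (a * ct d + b * ct c)" by (simp add: ctsimp msimp)
    then show ?thesis using r by simp
  qed
  note du = dual[OF abcd J]
  define x where "x = a - k1 * c"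
  have x: "C x" unfolding x_def by simp
  have ctx: "ct x = ct a + ct c * k1" unfolding x_def by (simp add: ctsimp sk msimp)
  have xxi: "x * xi = 1\<^sub>m n" "xi * x = 1\<^sub>m n" using inv1 inv2 unfolding x_def by auto
  have "ct xi * ct x = ct (x * xi)" using ct_mult[of x n n xi n] x by simp
  moreover have "ct x * ct xi = ct (xi * x)" using ct_mult[of xi n n x n] x by simp
  ultimately have cxi: "ct xi * ct x = 1\<^sub>m n" "ct x * ct xi = 1\<^sub>m n" using xxi by simp_all
  have xxiZ: "x * (xi * Z) = Z" if "C Z" for Z using xxi that x by (simp add: m_assoc[of x xi Z, symmetric] o_l)
  have xixZ: "xi * (x * Z) = Z" if "C Z" for Z using xxi that x by (simp add: m_assoc[of xi x Z, symmetric] o_l)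
  have cxiZ: "ct xi * (ct x * Z) = Z" if "C Z" for Z using cxi that x by (simp add: m_assoc[of "ct xi" "ct x" Z, symmetric] o_l)
  have cxiZ2: "ct x * (ct xi * Z) = Z" if "C Z" for Z using cxi that x by (simp add: m_assoc[of "ct x" "ct xi" Z, symmetric] o_l)
  have iso0: "ct x * c + ct c * x = 0\<^sub>m n n"
  proof -
    have "ct x * c + ct c * x = ct a * c + ct c * a" unfolding ctx unfolding x_def by (simp add: msimp)
    then show ?thesis using du(1) by simp
  qed
  have isoZ: "ct x * (c * Z) = - (ct c * (x * Z))" if "C Z" for Z
  proof -
    have "ct x * c = - (ct c * x)" using iso0 x by (intro add_eq0_neg) auto
    then have "ct x * c * Z = - (ct c * x) * Z" by simp
    then show ?thesis using that x by (simp add: msimp)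
  qed
  show skm: "ct (c * xi) = - (c * xi)"
  proof -
    have "c * xi + ct (c * xi) = ct xi * (ct x * c + ct c * x) * xi"
      using x by (simp add: ctsimp msimp xxiZ cxiZ xxi)
    also have "\<dots> = 0\<^sub>m n n" unfolding iso0 by (simp add: msimp)
    finally have "ct (c * xi) + c * xi = 0\<^sub>m n n" by (simp add: a_comm)
    then show ?thesis by (intro add_eq0_neg) auto
  qed
  define B' where "B' = b - k1 * d"
  have B': "C B'" unfolding B'_def by simp
  show skk: "ct ((b - k1 * d) * ct (a - k1 * c)) = - ((b - k1 * d) * ct (a - k1 * c))"
  proof -
    have "(b - k1 * d) * ct (a - k1 * c) + ct ((b - k1 * d) * ct (a - k1 * c)) =
      (b * ct a + a * ct b) + (b * ct c + a * ct d) * k1 - k1 * (d * ct a + c * ct b) - k1 * (d * ct c + c * ct d) * k1"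
      by (simp add: msimp ctsimp sk)
    also have "\<dots> = 0\<^sub>m n n"
    proof -
      have "b * ct a + a * ct b = 0\<^sub>m n n" "b * ct c + a * ct d = 1\<^sub>m n" "d * ct c + c * ct d = 0\<^sub>m n n"
        using r by (simp_all add: a_comm)
      then show ?thesis using r4 by (simp add: msimp)
    qed
    finally show ?thesis by (intro add_eq0_neg[of "ct _", OF _ _ trans[OF a_comm]]) auto
  qed
  have Q: "c * xi * B' + ct xi = d"
  proof -
    have L: "ct x * (c * xi * B' + ct xi) = 1\<^sub>m n + - (ct c * b) + ct c * (k1 * d)"
      unfolding B'_def using x by (simp add: msimp isoZ xxiZ cxiZ2 cxi)
    have "ct a * d = (ct a * d + ct c * b) + - (ct c * b)" by (simp add: msimp)
    then have du2: "ct a * d = 1\<^sub>m n + - (ct c * b)" using du(2) by simp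
    have R: "ct x * d = ct a * d + ct c * (k1 * d)" unfolding ctx by (simp add: msimp)
    have "ct x * (c * xi * B' + ct xi) = ct x * d" unfolding L R du2 by (simp add: msimp)
    then have "ct xi * (ct x * (c * xi * B' + ct xi)) = ct xi * (ct x * d)" by simp
    then show ?thesis using B' by (simp add: cxiZ)
  qed
  have P3: "four_block_mat (1\<^sub>m n) (B' * ct x) (0\<^sub>m n n) (1\<^sub>m n) * four_block_mat x (0\<^sub>m n n) (0\<^sub>m n n) (ct xi)
     = four_block_mat x B' (0\<^sub>m n n) (ct xi)"
    using x B' by (subst fbmult) (auto simp: msimp cxi intro!: cong_four_block_mat)
  have P2: "four_block_mat (1\<^sub>m n) (0\<^sub>m n n) (c * xi) (1\<^sub>m n) * four_block_mat x B' (0\<^sub>m n n) (ct xi)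
     = four_block_mat x B' c d"
    using x B' Q by (subst fbmult) (auto simp: msimp xixZ xxi intro!: cong_four_block_mat)
  have P1: "four_block_mat (1\<^sub>m n) k1 (0\<^sub>m n n) (1\<^sub>m n) * four_block_mat x B' c d
     = four_block_mat a b c d"
    using x B' unfolding x_def B'_def by (subst fbmult) (auto simp: msimp intro!: cong_four_block_mat)
  show "four_block_mat a b c d = four_block_mat (1\<^sub>m n) k1 (0\<^sub>m n n) (1\<^sub>m n) *
       (four_block_mat (1\<^sub>m n) (0\<^sub>m n n) (c * xi) (1\<^sub>m n) *
       (four_block_mat (1\<^sub>m n) ((b - k1 * d) * ct (a - k1 * c)) (0\<^sub>m n n) (1\<^sub>m n) *
        four_block_mat (a - k1 * c) (0\<^sub>m n n) (0\<^sub>m n n) (ct xi)))"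
    using P1 P2 P3 unfolding x_def B'_def by simp
qed
end

context barl begin
lemma step1: assumes abcd: "C (a::'a mat)" "C b" "C c" "C d" and G: "four_block_mat a b c d \<in> grpG \<sigma> n"
  and y: "y \<in> carrier_vec n" and y0: "y \<noteq> 0\<^sub>v n" and ay: "a *\<^sub>v y = 0\<^sub>v n"
  and t: "t \<noteq> 0" and st: "\<sigma> t = - t"
  shows "\<exists>k0 \<phi>. C k0 \<and> ct k0 = - k0 \<and> \<phi> \<in> carrier_vec n \<and> \<phi> \<bullet> y \<noteq> 0 \<and>
    (\<forall>x\<in>carrier_vec n. (a - k0 * c) *\<^sub>v x = 0\<^sub>v n \<longrightarrow> a *\<^sub>v x = 0\<^sub>v n \<and> \<phi> \<bullet> x = 0)"
proof -
  define p where "p = c *\<^sub>v y"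
  have p: "p \<in> carrier_vec n" unfolding p_def using abcd y by simp
  have "p \<noteq> 0\<^sub>v n" unfolding p_def using inj[OF abcd G y ay] y0 by auto
  then obtain i where i: "i < n" and pi: "p $ i \<noteq> 0" using nonzero_vec_idx[OF p] by auto
  define k0 where "k0 = mat n n (\<lambda>(r,s). if r = i \<and> s = i then t else 0)"
  have k0: "C k0" unfolding k0_def by simp
  have sk: "ct k0 = - k0" unfolding k0_def by (rule eq_matI) (simp_all add: st)
  define \<phi> where "\<phi> = row c i"
  have phi: "\<phi> \<in> carrier_vec n" unfolding \<phi>_def by (rule row_carrier_vec[OF i abcd(3)])
  have phiy: "\<phi> \<bullet> y = p $ i" unfolding \<phi>_def p_def using abcd i by simp
  have ker: "a *\<^sub>v x = 0\<^sub>v n \<and> \<phi> \<bullet> x = 0" if x: "x \<in> carrier_vec n" and e: "(a - k0 * c) *\<^sub>v x = 0\<^sub>v n" for x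
  proof -
    define w where "w = c *\<^sub>v x"
    have w: "w \<in> carrier_vec n" unfolding w_def using abcd x by simp
    have ax: "(a *\<^sub>v x) $ r = (if r = i then t * w $ i else 0)" if r: "r < n" for r
    proof -
      have "(a *\<^sub>v x) $ r = (k0 *\<^sub>v w) $ r" unfolding w_def by (rule kernel_split[OF abcd(1,3) k0 x e r])
      also have "\<dots> = (\<Sum>s\<in>{0..<n}. (if r = i \<and> s = i then t else 0) * w $ s)"
        unfolding k0_def using r w by (simp add: scalar_prod_def)
      also have "\<dots> = (\<Sum>s\<in>{0..<n}. if s = i then (if r = i then t * w $ i else 0) else 0)"
        by (rule sum.cong) auto
      also have "\<dots> = (if r = i then t * w $ i else 0)" using i by simp
      finally show ?thesis .
    qed
    have "0 = bf p (a *\<^sub>v x)" unfolding p_def using iso[OF abcd G y ay x] by simp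
    also have "\<dots> = (\<Sum>r\<in>{0..<n}. \<sigma> (p $ r) * (a *\<^sub>v x) $ r)" using bf_sum p abcd x by simp
    also have "\<dots> = (\<Sum>r\<in>{0..<n}. if r = i then \<sigma> (p $ i) * (t * w $ i) else 0)"
      by (rule sum.cong) (auto simp: ax)
    also have "\<dots> = \<sigma> (p $ i) * (t * w $ i)" using i by simp
    finally have "w $ i = 0" using pi t by simp
    then have "a *\<^sub>v x = 0\<^sub>v n" using ax abcd by (intro eq_vecI) auto
    moreover have "\<phi> \<bullet> x = 0" using \<open>w $ i = 0\<close> unfolding \<phi>_def w_def using i abcd by simp
    ultimately show ?thesis by simp
  qed
  show ?thesis
    by (rule exI[of _ k0], rule exI[of _ \<phi>]) (use k0 sk phi phiy pi ker in auto)
qed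

end


definition swp :: "nat \<Rightarrow> nat \<Rightarrow> 'b mat \<Rightarrow> 'b mat \<Rightarrow> 'b mat" where
  "swp n j P Q = mat n n (\<lambda>(r,s). if s = j then Q $$ (r,s) else P $$ (r,s))"

lemma swp_carrier[simp]: "swp n j P Q \<in> carrier_mat n n" unfolding swp_def by simp
lemma swp_dim[simp]: "dim_row (swp n j P Q) = n" "dim_col (swp n j P Q) = n" unfolding swp_def by simp_all
lemma swp_index[simp]: "r < n \<Longrightarrow> s < n \<Longrightarrow> swp n j P Q $$ (r,s) = (if s = j then Q $$ (r,s) else P $$ (r,s))"
  unfolding swp_def by simp

lemma swp_rel: fixes P :: "'b::comm_ring_1 mat"
  assumes "P \<in> carrier_mat n n" "Q \<in> carrier_mat n n" "R \<in> carrier_mat n n" "S \<in> carrier_mat n n"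
  shows "swp n j P Q * transpose_mat (swp n j R S) + swp n j Q P * transpose_mat (swp n j S R)
    = P * transpose_mat R + Q * transpose_mat S"
proof (rule eq_matI)
  fix u v assume "u < dim_row (P * transpose_mat R + Q * transpose_mat S)" "v < dim_col (P * transpose_mat R + Q * transpose_mat S)"
  then have u: "u < n" and v: "v < n" using assms by auto
  have "(swp n j P Q * transpose_mat (swp n j R S) + swp n j Q P * transpose_mat (swp n j S R)) $$ (u,v)
    = (\<Sum>s\<in>{0..<n}. swp n j P Q $$ (u,s) * swp n j R S $$ (v,s)) + (\<Sum>s\<in>{0..<n}. swp n j Q P $$ (u,s) * swp n j S R $$ (v,s))"
    using u v by (simp add: scalar_prod_def)
  also have "\<dots> = (\<Sum>s\<in>{0..<n}. swp n j P Q $$ (u,s) * swp n j R S $$ (v,s) + swp n j Q P $$ (u,s) * swp n j S R $$ (v,s))"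
    by (simp add: sum.distrib)
  also have "\<dots> = (\<Sum>s\<in>{0..<n}. P $$ (u,s) * R $$ (v,s) + Q $$ (u,s) * S $$ (v,s))"
    by (rule sum.cong) (use u v in auto)
  also have "\<dots> = (\<Sum>s\<in>{0..<n}. P $$ (u,s) * R $$ (v,s)) + (\<Sum>s\<in>{0..<n}. Q $$ (u,s) * S $$ (v,s))"
    by (simp add: sum.distrib)
  also have "\<dots> = (P * transpose_mat R + Q * transpose_mat S) $$ (u,v)"
    using u v assms by (simp add: scalar_prod_def)
  finally show "(swp n j P Q * transpose_mat (swp n j R S) + swp n j Q P * transpose_mat (swp n j S R)) $$ (u,v)
    = (P * transpose_mat R + Q * transpose_mat S) $$ (u,v)" .
qed (use assms in auto)

lemma swp_fb: fixes a :: "'b::comm_ring_1 mat"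
  assumes ab: "a \<in> carrier_mat n n" "b \<in> carrier_mat n n" "c \<in> carrier_mat n n" "d \<in> carrier_mat n n" and j: "j < n"
  shows "four_block_mat (swp n j a b) (swp n j b a) (swp n j c d) (swp n j d c)
    = transpose_mat (swaprows j (n+j) (transpose_mat (four_block_mat a b c d)))"
proof (rule eq_matI)
  have dims: "dim_row a = n" "dim_col a = n" "dim_row b = n" "dim_col b = n"
     "dim_row c = n" "dim_col c = n" "dim_row d = n" "dim_col d = n" using ab by auto
  fix u v assume "u < dim_row (transpose_mat (swaprows j (n+j) (transpose_mat (four_block_mat a b c d))))"
    "v < dim_col (transpose_mat (swaprows j (n+j) (transpose_mat (four_block_mat a b c d))))"
  then have u: "u < n + n" and v: "v < n + n" using dims by (auto simp: mat_swaprows_def)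
  show "four_block_mat (swp n j a b) (swp n j b a) (swp n j c d) (swp n j d c) $$ (u,v) =
    transpose_mat (swaprows j (n+j) (transpose_mat (four_block_mat a b c d))) $$ (u,v)"
    using u v j dims by (auto simp: mat_swaprows_def)
qed (use ab in \<open>auto simp: mat_swaprows_def\<close>)

context barl begin

lemma ct_id: assumes sid: "\<forall>x. \<sigma> x = x" shows "ct A = transpose_mat A"
  by (rule eq_matI) (auto simp: sid)

lemma bf_id: assumes sid: "\<forall>x. \<sigma> x = x" shows "bf u v = u \<bullet> v"
proof -
  have "map_vec \<sigma> u = u" by (rule eq_vecI) (auto simp: sid)
  then show ?thesis unfolding bf_def by simp
qed

lemma det_V: "C (k::'a mat) \<Longrightarrow> det (four_block_mat (1\<^sub>m n) k (0\<^sub>m n n) (1\<^sub>m n)) = 1"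
  by (subst det_four_block_mat_lower_left_zero[of _ n _ n]) auto
lemma det_VT: "C (k::'a mat) \<Longrightarrow> det (four_block_mat (1\<^sub>m n) (0\<^sub>m n n) k (1\<^sub>m n)) = 1"
  by (subst det_four_block_mat_upper_right_zero[of _ n _ n]) auto
lemma det_H: "C (x::'a mat) \<Longrightarrow> C y \<Longrightarrow> det (four_block_mat x (0\<^sub>m n n) (0\<^sub>m n n) y) = det x * det y"
  by (subst det_four_block_mat_upper_right_zero[of _ n _ n]) auto

lemma inverse_ex: assumes "C (a::'a mat)" "det a \<noteq> 0"
  shows "\<exists>xi. C xi \<and> a * xi = 1\<^sub>m n \<and> xi * a = 1\<^sub>m n"
  using det_non_zero_imp_unit[OF assms, of "()"] unfolding Units_def ring_mat_def by auto

lemma detone: assumes sid: "\<forall>x. \<sigma> x = x" and abcd: "C (a::'a mat)" "C b" "C c" "C d"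
  and J: "four_block_mat a b c d * Jm * ct (four_block_mat a b c d) = Jm" and da: "det a \<noteq> 0"
  shows "det (four_block_mat a b c d) = 1"
proof -
  obtain xi where xi: "C xi" "a * xi = 1\<^sub>m n" "xi * a = 1\<^sub>m n" using inverse_ex[OF abcd(1) da] by auto
  have k0: "C (0\<^sub>m n n :: 'a mat)" "ct (0\<^sub>m n n) = - (0\<^sub>m n n :: 'a mat)" by (auto simp: uz)
  have a0: "a - 0\<^sub>m n n * c = a" using abcd by (simp add: msimp)
  have i1: "(a - 0\<^sub>m n n * c) * xi = 1\<^sub>m n" "xi * (a - 0\<^sub>m n n * c) = 1\<^sub>m n" unfolding a0 using xi by auto
  note D = decomp[OF abcd J k0 xi(1) i1, unfolded a0]
  define A1 where "A1 = four_block_mat (1\<^sub>m n) (0\<^sub>m n n) (0\<^sub>m n n) (1\<^sub>m n :: 'a mat)"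
  define A2 where "A2 = four_block_mat (1\<^sub>m n) (0\<^sub>m n n) (c * xi) (1\<^sub>m n)"
  define A3 where "A3 = four_block_mat (1\<^sub>m n) ((b - 0\<^sub>m n n * d) * ct a) (0\<^sub>m n n) (1\<^sub>m n)"
  define A4 where "A4 = four_block_mat a (0\<^sub>m n n) (0\<^sub>m n n) (ct xi)"
  have cA: "A1 \<in> carrier_mat N2 N2" "A2 \<in> carrier_mat N2 N2" "A3 \<in> carrier_mat N2 N2" "A4 \<in> carrier_mat N2 N2"
    unfolding A1_def A2_def A3_def A4_def using abcd xi by auto
  have "det (four_block_mat a b c d) = det (A1 * (A2 * (A3 * A4)))" using D(3) unfolding A1_def A2_def A3_def A4_def by simp
  also have "\<dots> = det A1 * (det A2 * (det A3 * det A4))"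
    using cA by (simp add: det_mult[of _ N2])
  also have "\<dots> = det a * det xi"
    unfolding A1_def A2_def A3_def A4_def using abcd xi by (simp add: det_V det_VT det_H ct_id[OF sid] det_transpose)
  also have "\<dots> = 1" using det_mult[of a n xi] xi abcd by simp
  finally show ?thesis .
qed

end

context barl begin
lemma mvc[simp]: "C (M::'a mat) \<Longrightarrow> v \<in> carrier_vec n \<Longrightarrow> M *\<^sub>v v \<in> carrier_vec n" by simp

lemma corank1_false: assumes sid: "\<forall>x. \<sigma> x = x" and two: "(1::'a) + 1 \<noteq> 0"
  and abcd: "C (a::'a mat)" "C b" "C c" "C d" and G: "four_block_mat a b c d \<in> grpG \<sigma> n"
  and y: "y \<in> carrier_vec n" and y0: "y \<noteq> 0\<^sub>v n" and ay: "a *\<^sub>v y = 0\<^sub>v n"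
  and span: "\<forall>x\<in>carrier_vec n. a *\<^sub>v x = 0\<^sub>v n \<longrightarrow> (\<exists>\<mu>. x = \<mu> \<cdot>\<^sub>v y)"
  shows False
proof -
  have cts: "C (ct a)" "C (ct b)" "C (ct c)" "C (ct d)" using abcd by auto
  note ctI = ct_id[OF sid]
  note GB = G_blocks[OF abcd G]
  define p where "p = c *\<^sub>v y"
  have p: "p \<in> carrier_vec n" unfolding p_def using abcd cts y by simp
  have p0: "p \<noteq> 0\<^sub>v n" unfolding p_def using abcd cts inj[OF abcd G y ay] y0 by auto
  have aTp: "ct a *\<^sub>v p = 0\<^sub>v n"
  proof -
    have r: "ct a * c = - (ct c * a)" using abcd cts GB(6) by (intro add_eq0_neg) auto
    have "ct a *\<^sub>v p = (ct a * c) *\<^sub>v y" unfolding p_def using abcd cts y by (simp add: assoc_mult_mat_vec[of _ n n _ n])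
    also have "\<dots> = - ((ct c * a) *\<^sub>v y)" unfolding r using abcd cts y by simp
    also have "\<dots> = 0\<^sub>v n" using abcd cts y ay by (simp add: assoc_mult_mat_vec[of _ n n _ n])
    finally show ?thesis .
  qed
  define w where "w = ct b *\<^sub>v p"
  have w: "w \<in> carrier_vec n" unfolding w_def using abcd cts p by simp
  have aw: "a *\<^sub>v w = 0\<^sub>v n"
  proof -
    have r: "a * ct b = - (b * ct a)" using abcd cts GB(3) by (intro add_eq0_neg) auto
    have "a *\<^sub>v w = (a * ct b) *\<^sub>v p" unfolding w_def using abcd cts p by (simp add: assoc_mult_mat_vec[of _ n n _ n])
    also have "\<dots> = - (b *\<^sub>v (ct a *\<^sub>v p))" unfolding r using abcd cts p by (simp add: assoc_mult_mat_vec[of _ n n _ n])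
    also have "\<dots> = 0\<^sub>v n" unfolding aTp using abcd cts by simp
    finally show ?thesis .
  qed
  have pcw: "p = c *\<^sub>v w"
  proof -
    have "p = (d * ct a + c * ct b) *\<^sub>v p" using abcd cts GB(5) p by simp
    also have "\<dots> = d *\<^sub>v (ct a *\<^sub>v p) + c *\<^sub>v (ct b *\<^sub>v p)" using abcd cts p
      using abcd cts by (simp add: add_mult_distrib_mat_vec[of _ n n] assoc_mult_mat_vec[of _ n n _ n])
    also have "\<dots> = c *\<^sub>v w" unfolding aTp w_def using abcd cts p by simp
    finally show ?thesis .
  qed
  obtain \<mu> where mu: "w = \<mu> \<cdot>\<^sub>v y" using abcd cts span w aw by blast
  have "c *\<^sub>v w = \<mu> \<cdot>\<^sub>v p" unfolding mu p_def using abcd y by (simp add: mult_mat_vec[of _ n n])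
  then have "p = \<mu> \<cdot>\<^sub>v p" using pcw by simp
  moreover obtain i0 where i0: "i0 < n" "p $ i0 \<noteq> 0" using abcd cts nonzero_vec_idx[OF p p0] by auto
  ultimately have "p $ i0 = \<mu> * p $ i0" by (metis index_smult_vec(1) p carrier_vecD)
  then have "\<mu> = 1" using abcd cts i0 by simp
  then have bTp: "ct b *\<^sub>v p = y" using abcd cts mu unfolding w_def by simp
  obtain j where j: "j < n" "y $ j \<noteq> 0" using abcd cts nonzero_vec_idx[OF y y0] by auto
  define a2 where "a2 = swp n j a b"
  define b2 where "b2 = swp n j b a"
  define c2 where "c2 = swp n j c d"
  define d2 where "d2 = swp n j d c"
  have c2s: "C a2" "C b2" "C c2" "C d2" unfolding a2_def b2_def c2_def d2_def using abcd cts by auto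
  have J2: "four_block_mat a2 b2 c2 d2 * Jm * ct (four_block_mat a2 b2 c2 d2) = Jm"
  proof -
    have "a2 * ct d2 + b2 * ct c2 = a * ct d + b * ct c" unfolding ctI a2_def b2_def c2_def d2_def
      by (rule swp_rel) (use abcd cts in auto)
    moreover have "a2 * ct b2 + b2 * ct a2 = a * ct b + b * ct a" unfolding ctI a2_def b2_def c2_def d2_def
      by (rule swp_rel) (use abcd cts in auto)
    moreover have "c2 * ct d2 + d2 * ct c2 = c * ct d + d * ct c" unfolding ctI a2_def b2_def c2_def d2_def
      by (rule swp_rel) (use abcd cts in auto)
    ultimately show ?thesis using abcd cts JR_fb[OF c2s] GB(2,3,4) by simp
  qed
  have Mc: "four_block_mat a b c d \<in> carrier_mat N2 N2" using abcd cts by simp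
  have "det (four_block_mat a2 b2 c2 d2) = - det (four_block_mat a b c d)"
  proof -
    have "four_block_mat a2 b2 c2 d2 = transpose_mat (swaprows j (n+j) (transpose_mat (four_block_mat a b c d)))"
      unfolding a2_def b2_def c2_def d2_def by (rule swp_fb) (use j abcd cts in auto)
    moreover have "det (transpose_mat (swaprows j (n+j) (transpose_mat (four_block_mat a b c d))))
       = det (swaprows j (n+j) (transpose_mat (four_block_mat a b c d)))"
      by (rule det_transpose[of _ N2]) (use abcd cts in \<open>simp add: mat_swaprows_def\<close>)
    moreover have "det (swaprows j (n+j) (transpose_mat (four_block_mat a b c d))) = - det (transpose_mat (four_block_mat a b c d))"
      by (rule det_swaprows[of j N2 "n+j"]) (use j abcd cts in auto)
    moreover have "det (transpose_mat (four_block_mat a b c d)) = det (four_block_mat a b c d)"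
      by (rule det_transpose[OF Mc])
    ultimately show ?thesis by simp
  qed
  then have dm: "det (four_block_mat a2 b2 c2 d2) = - 1" using abcd cts GB(9) by simp
  have da2: "det a2 \<noteq> 0"
  proof
    assume "det a2 = 0"
    then obtain x where x: "x \<in> carrier_vec n" "x \<noteq> 0\<^sub>v n" "a2 *\<^sub>v x = 0\<^sub>v n"
      using abcd cts det_0_iff_vec_prod_zero_field[OF c2s(1)] by auto
    have colp: "p \<bullet> col a2 s = (if s = j then y $ j else 0)" if s: "s < n" for s
    proof -
      have ca: "col a2 s = (if s = j then col b s else col a s)"
        unfolding a2_def by (rule eq_vecI) (use s abcd cts in auto)
      have "p \<bullet> col a s = (ct a *\<^sub>v p) $ s" using abcd cts s p unfolding ctI by (simp add: comm_scalar_prod[of _ n])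
      moreover have "p \<bullet> col b s = (ct b *\<^sub>v p) $ s" using abcd cts s p unfolding ctI by (simp add: comm_scalar_prod[of _ n])
      ultimately show ?thesis unfolding ca aTp bTp using abcd cts s by auto
    qed
    have "p \<bullet> (a2 *\<^sub>v x) = vec n (\<lambda>s. p \<bullet> col a2 s) \<bullet> x"
      using abcd cts assoc_scalar_prod[OF p c2s(1) x(1)] c2s(1) unfolding mult_mat_vec_def by simp
    also have "vec n (\<lambda>s. p \<bullet> col a2 s) = vec n (\<lambda>s. if s = j then y $ j else 0)"
      by (rule eq_vecI) (simp_all add: colp)
    also have "vec n (\<lambda>s. if s = j then y $ j else 0) \<bullet> x = (\<Sum>s\<in>{0..<n}. (if s = j then y $ j else 0) * x $ s)"
      unfolding scalar_prod_def using x(1) by simp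
    also have "\<dots> = (\<Sum>s\<in>{0..<n}. if s = j then y $ j * x $ j else 0)"
      by (rule sum.cong) auto
    also have "\<dots> = y $ j * x $ j" using abcd cts j by simp
    finally have "x $ j = 0" using abcd cts x(3) p j by simp
    have "a *\<^sub>v x = a2 *\<^sub>v x"
    proof (rule eq_vecI)
      fix r assume "r < dim_vec (a2 *\<^sub>v x)"
      then have r: "r < n" using abcd cts c2s by simp
      show "(a *\<^sub>v x) $ r = (a2 *\<^sub>v x) $ r" unfolding a2_def using abcd cts r x(1) \<open>x $ j = 0\<close>
        using abcd cts by (auto simp: scalar_prod_def intro!: sum.cong)
    qed (use c2s abcd in simp)
    then have "a *\<^sub>v x = 0\<^sub>v n" using abcd cts x(3) by simp
    then obtain \<nu> where nu: "x = \<nu> \<cdot>\<^sub>v y" using abcd cts span x(1) by blast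
    then have "\<nu> * y $ j = 0" using abcd cts \<open>x $ j = 0\<close> j y by simp
    then have "\<nu> = 0" using abcd cts j by simp
    then have "x = 0\<^sub>v n" using abcd cts nu y by (intro eq_vecI) auto
    with x(2) show False by simp
  qed
  from detone[OF sid c2s J2 da2] dm have "(1::'a) = - 1" by simp
  then have "(1::'a) + 1 = 0" by (metis add.right_inverse)
  with two show False by simp
qed

end

context barl begin

lemma sum2: fixes f :: "nat \<Rightarrow> 'b::comm_ring_1"
  assumes "i \<noteq> l" "i < n" "l < n"
  shows "(\<Sum>r\<in>{0..<n}. f r * ((if r = i then A else 0) + (if r = l then B else 0))) = f i * A + f l * B"
proof -
  have "(\<Sum>r\<in>{0..<n}. f r * ((if r = i then A else 0) + (if r = l then B else 0))) =
    (\<Sum>r\<in>{0..<n}. (if r = i then f i * A else 0) + (if r = l then f l * B else 0))"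
    by (rule sum.cong) (use assms in auto)
  also have "\<dots> = f i * A + f l * B" using assms by (simp add: sum.distrib)
  finally show ?thesis .
qed

definition Em :: "nat \<Rightarrow> nat \<Rightarrow> 'a mat" where "Em i l = mat n n (\<lambda>(r,s). if r = i \<and> s = l then 1 else 0)"

lemma Em_carrier[simp]: "C (Em i l)" unfolding Em_def by simp
lemma Em_dim[simp]: "dim_row (Em i l) = n" "dim_col (Em i l) = n" unfolding Em_def by simp_all

lemma Em_vec: assumes "r < n" "l < n" "w \<in> carrier_vec n"
  shows "(Em i l *\<^sub>v w) $ r = (if r = i then w $ l else 0)"
proof -
  have "(Em i l *\<^sub>v w) $ r = (\<Sum>s\<in>{0..<n}. (if r = i \<and> s = l then 1 else 0) * w $ s)"
    unfolding Em_def using assms by (simp add: scalar_prod_def)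
  also have "\<dots> = (\<Sum>s\<in>{0..<n}. if s = l then (if r = i then w $ l else 0) else 0)"
    by (rule sum.cong) auto
  also have "\<dots> = (if r = i then w $ l else 0)" using assms by simp
  finally show ?thesis .
qed

lemma step2: assumes sid: "\<forall>x. \<sigma> x = x"
  and abcd: "C (a::'a mat)" "C b" "C c" "C d" and G: "four_block_mat a b c d \<in> grpG \<sigma> n"
  and y1: "y1 \<in> carrier_vec n" and ay1: "a *\<^sub>v y1 = 0\<^sub>v n"
  and y2: "y2 \<in> carrier_vec n" and ay2: "a *\<^sub>v y2 = 0\<^sub>v n"
  and i: "i < n" and l: "l < n"
  and hp: "(c *\<^sub>v y1) $ i \<noteq> 0"
  and hr: "(c *\<^sub>v y1) $ i * (c *\<^sub>v y2) $ l - (c *\<^sub>v y2) $ i * (c *\<^sub>v y1) $ l \<noteq> 0"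
  shows "\<exists>k0 \<phi>. C k0 \<and> ct k0 = - k0 \<and> \<phi> \<in> carrier_vec n \<and> \<phi> \<bullet> y1 \<noteq> 0 \<and>
    (\<forall>x\<in>carrier_vec n. (a - k0 * c) *\<^sub>v x = 0\<^sub>v n \<longrightarrow> a *\<^sub>v x = 0\<^sub>v n \<and> \<phi> \<bullet> x = 0)"
proof -
  define p where "p = c *\<^sub>v y1"
  define q where "q = c *\<^sub>v y2"
  have p: "p \<in> carrier_vec n" "q \<in> carrier_vec n" unfolding p_def q_def using abcd y1 y2 by auto
  have pi: "p $ i \<noteq> 0" using hp unfolding p_def .
  have pr: "p $ i * q $ l - q $ i * p $ l \<noteq> 0" using hr unfolding p_def q_def .
  have il: "i \<noteq> l" using pr by (auto simp: mult.commute)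
  define k0 where "k0 = Em i l - Em l i"
  have k0: "C k0" unfolding k0_def by simp
  have sk: "ct k0 = - k0" unfolding ct_id[OF sid] k0_def Em_def by (rule eq_matI) (use il in auto)
  define \<phi> where "\<phi> = row c i"
  have phi: "\<phi> \<in> carrier_vec n" unfolding \<phi>_def by (rule row_carrier_vec[OF i abcd(3)])
  have phiy: "\<phi> \<bullet> y1 = p $ i" unfolding \<phi>_def p_def using abcd i by simp
  have ker: "a *\<^sub>v x = 0\<^sub>v n \<and> \<phi> \<bullet> x = 0" if x: "x \<in> carrier_vec n" and e: "(a - k0 * c) *\<^sub>v x = 0\<^sub>v n" for x
  proof -
    define w where "w = c *\<^sub>v x"
    have w: "w \<in> carrier_vec n" unfolding w_def using abcd x by simp
    have ax: "(a *\<^sub>v x) $ r = (if r = i then w $ l else 0) + (if r = l then - w $ i else 0)" if r: "r < n" for r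
    proof -
      have "(a *\<^sub>v x) $ r = (k0 *\<^sub>v w) $ r" unfolding w_def by (rule kernel_split[OF abcd(1,3) k0 x e r])
      also have "\<dots> = (Em i l *\<^sub>v w) $ r - (Em l i *\<^sub>v w) $ r"
        unfolding k0_def using r w by (simp add: minus_mult_distrib_mat_vec[of _ n n])
      also have "\<dots> = (if r = i then w $ l else 0) + (if r = l then - w $ i else 0)"
        using Em_vec[of r l w i] Em_vec[of r i w l] r w i l il by auto
      finally show ?thesis .
    qed
    have E: "v $ i * w $ l + v $ l * (- w $ i) = 0" if v: "v \<in> {p, q}" for v
    proof -
      obtain yy where yy: "yy \<in> carrier_vec n" "a *\<^sub>v yy = 0\<^sub>v n" "v = c *\<^sub>v yy"
        using v y1 y2 ay1 ay2 unfolding p_def q_def by auto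
      have vc: "v \<in> carrier_vec n" using yy abcd by simp
      have "0 = bf v (a *\<^sub>v x)" using iso[OF abcd G yy(1,2) x] yy(3) by simp
      also have "\<dots> = (\<Sum>r\<in>{0..<n}. v $ r * (a *\<^sub>v x) $ r)" unfolding bf_id[OF sid] scalar_prod_def
        using abcd x by simp
      also have "\<dots> = (\<Sum>r\<in>{0..<n}. v $ r * ((if r = i then w $ l else 0) + (if r = l then - w $ i else 0)))"
        by (rule sum.cong) (auto simp: ax)
      also have "\<dots> = v $ i * w $ l + v $ l * (- w $ i)" by (rule sum2[OF il i l])
      finally show ?thesis by simp
    qed
    have E1: "p $ i * w $ l - p $ l * w $ i = 0" using E[of p] by simp
    have E2: "q $ i * w $ l - q $ l * w $ i = 0" using E[of q] by simp
    have "(p $ i * q $ l - q $ i * p $ l) * w $ i = q $ i * (p $ i * w $ l - p $ l * w $ i) - p $ i * (q $ i * w $ l - q $ l * w $ i)"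
      by (simp add: algebra_simps)
    also have "\<dots> = 0" using E1 E2 by simp
    finally have wi: "w $ i = 0" using pr by simp
    then have "w $ l = 0" using E1 pi by simp
    then have "a *\<^sub>v x = 0\<^sub>v n" using ax wi abcd by (intro eq_vecI) auto
    moreover have "\<phi> \<bullet> x = 0" using wi unfolding \<phi>_def w_def using i abcd by simp
    ultimately show ?thesis by simp
  qed
  show ?thesis
    by (rule exI[of _ k0], rule exI[of _ \<phi>]) (use k0 sk phi phiy pi ker in auto)
qed

lemma step_id: assumes sid: "\<forall>x. \<sigma> x = x" and two: "(1::'a) + 1 \<noteq> 0"
  and abcd: "C (a::'a mat)" "C b" "C c" "C d" and G: "four_block_mat a b c d \<in> grpG \<sigma> n"
  and y: "y \<in> carrier_vec n" and y0: "y \<noteq> 0\<^sub>v n" and ay: "a *\<^sub>v y = 0\<^sub>v n"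
  shows "\<exists>k0 \<phi>. C k0 \<and> ct k0 = - k0 \<and> \<phi> \<in> carrier_vec n \<and> \<phi> \<bullet> y \<noteq> 0 \<and>
    (\<forall>x\<in>carrier_vec n. (a - k0 * c) *\<^sub>v x = 0\<^sub>v n \<longrightarrow> a *\<^sub>v x = 0\<^sub>v n \<and> \<phi> \<bullet> x = 0)"
proof -
  define p where "p = c *\<^sub>v y"
  have p: "p \<in> carrier_vec n" unfolding p_def using abcd y by simp
  have "p \<noteq> 0\<^sub>v n" unfolding p_def using inj[OF abcd G y ay] y0 by auto
  then obtain i where i: "i < n" and pi: "p $ i \<noteq> 0" using nonzero_vec_idx[OF p] by auto
  show ?thesis
  proof (cases "\<exists>y2 l. y2 \<in> carrier_vec n \<and> a *\<^sub>v y2 = 0\<^sub>v n \<and> l < n \<and>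
      p $ i * (c *\<^sub>v y2) $ l - (c *\<^sub>v y2) $ i * p $ l \<noteq> 0")
    case True
    then obtain y2 l where y2: "y2 \<in> carrier_vec n" "a *\<^sub>v y2 = 0\<^sub>v n" "l < n"
      "p $ i * (c *\<^sub>v y2) $ l - (c *\<^sub>v y2) $ i * p $ l \<noteq> 0" by blast
    show ?thesis by (rule step2[OF sid abcd G y ay y2(1,2) i y2(3)]) (use pi y2(4) in \<open>simp_all add: p_def\<close>)
  next
    case False
    have span: "\<forall>x\<in>carrier_vec n. a *\<^sub>v x = 0\<^sub>v n \<longrightarrow> (\<exists>\<mu>. x = \<mu> \<cdot>\<^sub>v y)"
    proof (intro ballI impI)
      fix x assume x: "x \<in> carrier_vec n" and ax: "a *\<^sub>v x = 0\<^sub>v n"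
      define q where "q = c *\<^sub>v x"
      have q: "q \<in> carrier_vec n" unfolding q_def using abcd x by simp
      have rel: "p $ i * q $ l = q $ i * p $ l" if "l < n" for l
        using False x ax that unfolding q_def by auto
      define v where "v = p $ i \<cdot>\<^sub>v x - q $ i \<cdot>\<^sub>v y"
      have v: "v \<in> carrier_vec n" unfolding v_def using x y by simp
      have av: "a *\<^sub>v v = 0\<^sub>v n" unfolding v_def using abcd x y ax ay
        by (simp add: mult_minus_distrib_mat_vec[of _ n n] mult_mat_vec[of _ n n]) (rule eq_vecI, auto)
      have cv: "c *\<^sub>v v = 0\<^sub>v n"
      proof -
        have "c *\<^sub>v v = p $ i \<cdot>\<^sub>v q - q $ i \<cdot>\<^sub>v p" unfolding v_def p_def q_def using abcd x y
          by (simp add: mult_minus_distrib_mat_vec[of _ n n] mult_mat_vec[of _ n n])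
        also have "\<dots> = 0\<^sub>v n" using p q rel by (intro eq_vecI) auto
        finally show ?thesis .
      qed
      have "v = 0\<^sub>v n" by (rule inj[OF abcd G v av cv])
      then have "x = (q $ i / p $ i) \<cdot>\<^sub>v y"
      proof -
        assume v0: "v = 0\<^sub>v n"
        show ?thesis
        proof (rule eq_vecI)
          fix r assume "r < dim_vec ((q $ i / p $ i) \<cdot>\<^sub>v y)"
          then have r: "r < n" using y by simp
          have "v $ r = 0" using v0 r by simp
          then have "p $ i * x $ r = q $ i * y $ r" unfolding v_def using r x y by simp
          then show "x $ r = ((q $ i / p $ i) \<cdot>\<^sub>v y) $ r" using r y pi by (simp add: field_simps)
        qed (use x y in simp)
      qed
      then show "\<exists>\<mu>. x = \<mu> \<cdot>\<^sub>v y" by blast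
    qed
    from corank1_false[OF sid two abcd G y y0 ay span] show ?thesis by simp
  qed
qed

lemma exists_k: assumes cs: "(\<exists>t. t \<noteq> 0 \<and> \<sigma> t = - t) \<or> ((\<forall>x. \<sigma> x = x) \<and> (1::'a) + 1 \<noteq> 0)"
  shows "finite J \<Longrightarrow> C (a::'a mat) \<Longrightarrow> C b \<Longrightarrow> C c \<Longrightarrow> C d \<Longrightarrow> four_block_mat a b c d \<in> grpG \<sigma> n \<Longrightarrow>
    C Y \<Longrightarrow> (\<forall>r<n. \<forall>j<n. j \<notin> J \<longrightarrow> Y $$ (r,j) = 0) \<Longrightarrow>
    (\<forall>x\<in>carrier_vec n. a *\<^sub>v x = 0\<^sub>v n \<longrightarrow> (\<exists>z\<in>carrier_vec n. x = Y *\<^sub>v z)) \<Longrightarrow>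
    \<exists>k. C k \<and> ct k = - k \<and> det (a - k * c) \<noteq> 0"
proof (induction "card J" arbitrary: J a b c d Y rule: less_induct)
  case less
  note abcd = less.prems(2-5)
  note G = less.prems(6)
  show ?case
  proof (cases "det a = 0")
    case False
    have "C (0\<^sub>m n n :: 'a mat)" "ct (0\<^sub>m n n) = - (0\<^sub>m n n :: 'a mat)" by (auto simp: uz)
    moreover have "a - 0\<^sub>m n n * c = a" using abcd by (simp add: msimp)
    ultimately show ?thesis using False by metis
  next
    case True
    then obtain y where y: "y \<in> carrier_vec n" "y \<noteq> 0\<^sub>v n" "a *\<^sub>v y = 0\<^sub>v n"
      using det_0_iff_vec_prod_zero_field[OF abcd(1)] by auto
    have "\<exists>k0 \<phi>. C k0 \<and> ct k0 = - k0 \<and> \<phi> \<in> carrier_vec n \<and> \<phi> \<bullet> y \<noteq> 0 \<and>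
      (\<forall>x\<in>carrier_vec n. (a - k0 * c) *\<^sub>v x = 0\<^sub>v n \<longrightarrow> a *\<^sub>v x = 0\<^sub>v n \<and> \<phi> \<bullet> x = 0)"
      using cs step1[OF abcd G y] step_id[OF _ _ abcd G y] by blast
    then obtain k0 \<phi> where k0: "C k0" "ct k0 = - k0" and phi: "\<phi> \<in> carrier_vec n" "\<phi> \<bullet> y \<noteq> 0"
      and ker0: "\<forall>x\<in>carrier_vec n. (a - k0 * c) *\<^sub>v x = 0\<^sub>v n \<longrightarrow> a *\<^sub>v x = 0\<^sub>v n \<and> \<phi> \<bullet> x = 0" by blast
    obtain z0 where z0: "z0 \<in> carrier_vec n" "y = Y *\<^sub>v z0" using less.prems(9) y by blast
    obtain i Y' where i: "i \<in> J" and Y': "C Y'" "\<forall>r<n. \<forall>j<n. j \<notin> J - {i} \<longrightarrow> Y' $$ (r,j) = 0"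
      "\<forall>z\<in>carrier_vec n. \<phi> \<bullet> (Y *\<^sub>v z) = 0 \<longrightarrow> Y' *\<^sub>v z = Y *\<^sub>v z"
      using shrink[OF less.prems(7,8) phi(1) z0(1)] phi(2) z0(2) by blast
    have lt: "card (J - {i}) < card J" using less.prems(1) i by (rule card_Diff1_less)
    have G': "four_block_mat (a - k0 * c) (b - k0 * d) c d \<in> grpG \<sigma> n" by (rule shift_G[OF abcd k0 G])
    have ker': "\<forall>x\<in>carrier_vec n. (a - k0 * c) *\<^sub>v x = 0\<^sub>v n \<longrightarrow> (\<exists>z\<in>carrier_vec n. x = Y' *\<^sub>v z)"
    proof (intro ballI impI)
      fix x assume x: "x \<in> carrier_vec n" and e: "(a - k0 * c) *\<^sub>v x = 0\<^sub>v n"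
      then have ax: "a *\<^sub>v x = 0\<^sub>v n" and px: "\<phi> \<bullet> x = 0" using ker0 by auto
      then obtain z where z: "z \<in> carrier_vec n" "x = Y *\<^sub>v z" using less.prems(9) x by blast
      then have "Y' *\<^sub>v z = x" using Y'(3) px by simp
      then show "\<exists>z\<in>carrier_vec n. x = Y' *\<^sub>v z" using z by metis
    qed
    have "\<exists>k. C k \<and> ct k = - k \<and> det (a - k0 * c - k * c) \<noteq> 0"
      by (rule less.hyps[OF lt]) (use less.prems(1) abcd k0 G' Y' ker' in auto)
    then obtain k' where k': "C k'" "ct k' = - k'" "det (a - k0 * c - k' * c) \<noteq> 0" by blast
    have "ct (k0 + k') = - (k0 + k')" using k0 k' by (simp add: ctsimp a_uminus_add)
    moreover have "a - (k0 + k') * c = a - k0 * c - k' * c" using abcd k0 k' by (simp add: msimp)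
    ultimately show ?thesis using k0 k' by (metis c_add)
  qed
qed

end

lemma adm_props: assumes "admissible_bar (\<sigma> :: 'a::field \<Rightarrow> 'a)"
  shows "(\<forall>x y. \<sigma> (x + y) = \<sigma> x + \<sigma> y) \<and> (\<forall>x y. \<sigma> (x * y) = \<sigma> x * \<sigma> y) \<and> \<sigma> 1 = 1 \<and> (\<forall>x. \<sigma> (\<sigma> x) = x)"
proof (cases "\<sigma> = id")
  case True
  then show ?thesis by simp
next
  case False
  then have fa: "field_aut \<sigma>" and inv: "\<sigma> \<circ> \<sigma> = id" using assms unfolding admissible_bar_def by auto
  from inv have "\<forall>x. \<sigma> (\<sigma> x) = x" by (metis comp_apply id_apply)
  with fa show ?thesis unfolding field_aut_def by auto
qed

lemma adm_cases: assumes adm: "admissible_bar (\<sigma> :: 'a::field \<Rightarrow> 'a)"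
  shows "(\<exists>t. t \<noteq> 0 \<and> \<sigma> t = - t) \<or> ((\<forall>x. \<sigma> x = x) \<and> (1::'a) + 1 \<noteq> 0)"
proof -
  have P: "\<forall>x y. \<sigma> (x + y) = \<sigma> x + \<sigma> y" "\<forall>x y. \<sigma> (x * y) = \<sigma> x * \<sigma> y" "\<sigma> 1 = 1" "\<forall>x. \<sigma> (\<sigma> x) = x"
    using adm_props[OF adm] by auto
  interpret B: barl 0 \<sigma> by unfold_locales (use P in auto)
  show ?thesis
  proof (cases "(1::'a) + 1 = 0")
    case True
    then have "\<sigma> 1 = - 1" using P(3) by (metis add_eq_0_iff)
    then show ?thesis by (intro disjI1 exI[of _ 1]) auto
  next
    case two: False
    show ?thesis
    proof (cases "\<forall>x. \<sigma> x = x")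
      case True
      then show ?thesis using two by auto
    next
      case False
      then obtain \<alpha> where al: "\<sigma> \<alpha> \<noteq> \<alpha>" by auto
      define t where "t = \<alpha> - \<sigma> \<alpha>"
      have "t \<noteq> 0" unfolding t_def using al by simp
      moreover have "\<sigma> t = - t" unfolding t_def by (simp add: B.s_minus P(4))
      ultimately show ?thesis by auto
    qed
  qed
qed

theorem lemma4p2:
  fixes \<sigma> :: "'a::field \<Rightarrow> 'a" and n :: nat
  assumes "n \<ge> 3" and "admissible_bar \<sigma>"
  shows "grpG \<sigma> n = {v1 * u * v2 * h | v1 u v2 h.
           v1 \<in> grpV \<sigma> n \<and> u \<in> grpVT \<sigma> n \<and> v2 \<in> grpV \<sigma> n \<and> h \<in> grpH \<sigma> n \<inter> grpG \<sigma> n}"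
proof -
  have P: "\<forall>x y. \<sigma> (x + y) = \<sigma> x + \<sigma> y" "\<forall>x y. \<sigma> (x * y) = \<sigma> x * \<sigma> y" "\<sigma> 1 = 1" "\<forall>x. \<sigma> (\<sigma> x) = x"
    using adm_props[OF assms(2)] by auto
  interpret B: barl n \<sigma> by unfold_locales (use P in auto)
  have cs: "(\<exists>t. t \<noteq> 0 \<and> \<sigma> t = - t) \<or> ((\<forall>x. \<sigma> x = x) \<and> (1::'a) + 1 \<noteq> 0)"
    by (rule adm_cases[OF assms(2)])
  show ?thesis
  proof (intro equalityI subsetI)
    fix g assume g: "g \<in> grpG \<sigma> n"
    then obtain a b c d where gfb: "g = four_block_mat a b c d" and abcd: "B.C a" "B.C b" "B.C c" "B.C d"
      unfolding grpG_def by blast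
    have G: "four_block_mat a b c d \<in> grpG \<sigma> n" using g gfb by simp
    have "\<exists>k. B.C k \<and> B.ct k = - k \<and> det (a - k * c) \<noteq> 0"
      by (rule B.exists_k[OF cs, of "{..<n}" a b c d "1\<^sub>m n"]) (use abcd G in auto)
    then obtain k1 where k1: "B.C k1" "B.ct k1 = - k1" "det (a - k1 * c) \<noteq> 0" by blast
    define x where "x = a - k1 * c"
    have x: "B.C x" unfolding x_def using abcd k1 by simp
    obtain xi where xi: "B.C xi" "x * xi = 1\<^sub>m n" "xi * x = 1\<^sub>m n"
      using B.inverse_ex[OF x] k1(3) unfolding x_def by auto
    note J = B.G_blocks(1)[OF abcd G]
    note D = B.decomp[OF abcd J k1(1,2) xi(1) xi(2,3)[unfolded x_def], folded x_def]
    define k2 where "k2 = (b - k1 * d) * B.ct x"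
    define v1 where "v1 = four_block_mat (1\<^sub>m n) k1 (0\<^sub>m n n) (1\<^sub>m n)"
    define u where "u = four_block_mat (1\<^sub>m n) (0\<^sub>m n n) (c * xi) (1\<^sub>m n)"
    define v2 where "v2 = four_block_mat (1\<^sub>m n) k2 (0\<^sub>m n n) (1\<^sub>m n)"
    define h where "h = four_block_mat x (0\<^sub>m n n) (0\<^sub>m n n) (B.ct xi)"
    have cm: "v1 \<in> carrier_mat B.N2 B.N2" "u \<in> carrier_mat B.N2 B.N2" "v2 \<in> carrier_mat B.N2 B.N2"
      "h \<in> carrier_mat B.N2 B.N2"
      unfolding v1_def u_def v2_def h_def k2_def using abcd k1 xi x by auto
    have g1: "g = v1 * (u * (v2 * h))" unfolding gfb v1_def u_def v2_def h_def k2_def using D(3) by simp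
    have "v1 * u * v2 * h = v1 * u * (v2 * h)" by (rule assoc_mult_mat[OF mult_carrier_mat[OF cm(1,2)] cm(3,4)])
    also have "\<dots> = v1 * (u * (v2 * h))" by (rule assoc_mult_mat[OF cm(1,2) mult_carrier_mat[OF cm(3,4)]])
    finally have g2: "g = v1 * u * v2 * h" using g1 by simp
    have k2: "B.C k2" "B.ct k2 = - k2" unfolding k2_def using D(2) abcd k1 x by auto
    have m: "B.C (c * xi)" "B.ct (c * xi) = - (c * xi)" using D(1) abcd xi by auto
    have v1V: "v1 \<in> grpV \<sigma> n" unfolding v1_def grpV_def using k1 by blast
    have uVT: "u \<in> grpVT \<sigma> n" unfolding u_def grpVT_def using m by blast
    have v2V: "v2 \<in> grpV \<sigma> n" unfolding v2_def grpV_def using k2 by blast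
    have hH: "h \<in> grpH \<sigma> n" unfolding h_def grpH_def using x xi by blast
    have deth: "det h = 1"
    proof -
      have "det g = det v1 * det u * det v2 * det h" unfolding g2 using cm
        by (simp add: det_mult[of _ B.N2])
      also have "det v1 = 1" unfolding v1_def by (rule B.det_V[OF k1(1)])
      also have "det u = 1" unfolding u_def by (rule B.det_VT[OF m(1)])
      also have "det v2 = 1" unfolding v2_def by (rule B.det_V[OF k2(1)])
      finally show ?thesis using B.G_blocks(9)[OF abcd G] gfb by simp
    qed
    have hG: "h \<in> grpG \<sigma> n" unfolding h_def
    proof (rule B.G_intro)
      show "det (four_block_mat x (0\<^sub>m n n) (0\<^sub>m n n) (B.ct xi)) = 1" using deth unfolding h_def .
      show "x * B.ct (B.ct xi) + 0\<^sub>m n n * B.ct (0\<^sub>m n n) = 1\<^sub>m n" using x xi by (simp add: B.msimp)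
      show "x * B.ct (0\<^sub>m n n) + 0\<^sub>m n n * B.ct x = 0\<^sub>m n n" using x xi by (simp add: B.msimp)
      show "0\<^sub>m n n * B.ct (B.ct xi) + B.ct xi * B.ct (0\<^sub>m n n) = 0\<^sub>m n n" using x xi by (simp add: B.msimp)
    qed (use x xi in auto)
    show "g \<in> {v1 * u * v2 * h | v1 u v2 h.
           v1 \<in> grpV \<sigma> n \<and> u \<in> grpVT \<sigma> n \<and> v2 \<in> grpV \<sigma> n \<and> h \<in> grpH \<sigma> n \<inter> grpG \<sigma> n}"
      using g2 v1V uVT v2V hH hG by blast
  next
    fix g assume "g \<in> {v1 * u * v2 * h | v1 u v2 h.
           v1 \<in> grpV \<sigma> n \<and> u \<in> grpVT \<sigma> n \<and> v2 \<in> grpV \<sigma> n \<and> h \<in> grpH \<sigma> n \<inter> grpG \<sigma> n}"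
    then obtain v1 u v2 h where g: "g = v1 * u * v2 * h" and v1: "v1 \<in> grpV \<sigma> n" and u: "u \<in> grpVT \<sigma> n"
      and v2: "v2 \<in> grpV \<sigma> n" and h: "h \<in> grpG \<sigma> n" by blast
    have "v1 \<in> grpG \<sigma> n" using v1 unfolding grpV_def using B.V_in_G by blast
    moreover have "u \<in> grpG \<sigma> n" using u unfolding grpVT_def using B.VT_in_G by blast
    moreover have "v2 \<in> grpG \<sigma> n" using v2 unfolding grpV_def using B.V_in_G by blast
    ultimately show "g \<in> grpG \<sigma> n" unfolding g using h by (intro B.G_mult) auto
  qed
qed


end
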